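(* Let $N \geq 5$ be an odd integer and $\kappa$ a real number. Let $a>0$ and $b$ be real numbers such that the data set $\Phi_N=(X_1,\dots,X_N)$ consisting of $X_1 = a$, of $\tfrac{N-1}{2}$ points equal to $b - \tfrac{a}{N-1}$, and of $\tfrac{N-1}{2}$ points equal to $-b - \tfrac{a}{N-1}$ satisfies $\mathbb{E}(X)=0$, $\mathbb{E}(X^2)=1$ and $\mathbb{E}(X^4)=\kappa$, and such that $a^2$ is the larger root of the quadratic equation below. Then $a^2$ satisfies $$(a^2)^2 - 2\frac{N-1}{N+1}\,a^2 + G(N,\kappa) = 0,$$ and consequently $$a = a(N,\kappa) = \sqrt{ \frac{N-1}{N+1} + \sqrt{ \Bigl( \frac{N-1}{N+1} \Bigr)^2 - G(N,\kappa)}},$$ where $$G(N,\kappa) = \frac{N(N-1)^2 - (N-1)^3 \kappa}{(N+1)(N-3)}.$$ Furthermore, for fixed $\kappa > 1$, $a(N,\kappa) \sim [N (\kappa - 1)]^{1/4}$ as $N \to \infty$.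
   Context: For a finite data set $(X_1,\dots,X_N)$ and a function $f$, $\mathbb{E}(f(X))$ denotes the empirical mean $\frac1N\sum_{i=1}^N f(X_i)$. Since the mean is $0$ and the second moment is $1$, $\kappa=\mathbb{E}(X^4)$ is the kurtosis of the data set, and $a$ is the number of standard deviations by which $X_1$ lies above the mean. *)

theory Defs
  imports "HOL-Analysis.Analysis" "HOL-Library.Landau_Symbols"
begin

definition emp_mean :: "nat \<Rightarrow> (nat \<Rightarrow> real) \<Rightarrow> (real \<Rightarrow> real) \<Rightarrow> real" where
  "emp_mean N X f = (\<Sum>i=1..N. f (X i)) / real N"

definition Phi :: "nat \<Rightarrow> real \<Rightarrow> real \<Rightarrow> nat \<Rightarrow> real" where
  "Phi N a b i = (if i = 1 then a
                  else if i \<le> (N + 1) div 2 then b - a / (real N - 1)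
                  else - b - a / (real N - 1))"

definition G :: "real \<Rightarrow> real \<Rightarrow> real" where
  "G N \<kappa> = (N * (N - 1)^2 - (N - 1)^3 * \<kappa>) / ((N + 1) * (N - 3))"

definition a_fun :: "real \<Rightarrow> real \<Rightarrow> real" where
  "a_fun N \<kappa> = sqrt ((N - 1) / (N + 1) + sqrt (((N - 1) / (N + 1))^2 - G N \<kappa>))"

end

theory Submission imports Defs "HOL-Real_Asymp.Real_Asymp" begin

lemma sum_Phi:
  fixes f :: "real \<Rightarrow> real"
  shows "(\<Sum>i=1..2*m+1. f (Phi (2*m+1) a b i)) = f a + real m * f (b - a/(2*real m)) + real m * f (-b - a/(2*real m))"
proof -
  have e: "{1..2*m+1} = {1} \<union> ({2..m+1} \<union> {m+2..2*m+1})" by auto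
  have s1: "(\<Sum>i\<in>{2..m+1}. f (Phi (2*m+1) a b i)) = (\<Sum>i\<in>{2..m+1}. f (b - a/(2*real m)))"
    by (rule sum.cong) (auto simp: Phi_def)
  have s2: "(\<Sum>i\<in>{m+2..2*m+1}. f (Phi (2*m+1) a b i)) = (\<Sum>i\<in>{m+2..2*m+1}. f (-b - a/(2*real m)))"
    by (rule sum.cong) (auto simp: Phi_def)
  show ?thesis
    unfolding e
    apply (subst sum.union_disjoint, simp, simp, force)
    apply (subst sum.union_disjoint, simp, simp, force)
    using s1 s2 by (simp add: Phi_def)
qed

lemma asymp:
  assumes k: "k > (1::real)"
  shows "(\<lambda>n::nat. a_fun (real (2*n+1)) k) \<sim>[at_top] (\<lambda>n::nat. (real (2*n+1) * (k - 1)) powr (1/4))"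
proof (rule asymp_equivI')
  define p where "p = (\<lambda>n::nat. (real (2*n+1) - 1) / (real (2*n+1) + 1))"
  define Q where "Q = (\<lambda>n::nat. (p n)^2 - G (real (2*n+1)) k)"
  define s where "s = (\<lambda>n::nat. real (2*n+1) * (k - 1))"
  define t where "t = k - 1"
  have t: "t > 0" and kt: "k = 1 + t" using k by (auto simp: t_def)
  have H1: "((\<lambda>n. Q n / s n) \<longlongrightarrow> 1) at_top"
    unfolding Q_def p_def s_def G_def kt using t by real_asymp
  have H2: "((\<lambda>n. p n / sqrt (s n)) \<longlongrightarrow> 0) at_top"
    unfolding p_def s_def using k by real_asymp
  have "((\<lambda>n. sqrt (p n / sqrt (s n) + sqrt (Q n / s n))) \<longlongrightarrow> sqrt (0 + sqrt 1)) at_top"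
    by (intro tendsto_intros H1 H2)
  moreover have "a_fun (real (2*n+1)) k / (real (2*n+1) * (k - 1)) powr (1/4)
      = sqrt (p n / sqrt (s n) + sqrt (Q n / s n))" for n
  proof -
    have sp: "s n > 0" unfolding s_def using k by auto
    have "(real (2*n+1) * (k - 1)) powr (1/4) = sqrt (sqrt (s n))"
      unfolding s_def using sp[unfolded s_def]
      by (simp add: sqrt_def root_powr_inverse powr_powr)
    moreover have "a_fun (real (2*n+1)) k = sqrt (p n + sqrt (Q n))"
      unfolding a_fun_def Q_def p_def by simp
    moreover have "p n / sqrt (s n) + sqrt (Q n / s n) = (p n + sqrt (Q n)) / sqrt (s n)"
      using sp by (simp add: real_sqrt_divide add_divide_distrib)
    ultimately show ?thesis by (simp add: real_sqrt_divide)
  qed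
  ultimately show "((\<lambda>n. a_fun (real (2*n+1)) k / (real (2*n+1) * (k - 1)) powr (1/4)) \<longlongrightarrow> 1) at_top"
    by simp
qed
lemma quad:
  fixes m :: nat and a b k :: real
  assumes m: "m \<ge> 2"
    and e2: "a^2 + real m * (b - a/(2*real m))^2 + real m * (-b - a/(2*real m))^2 = 2*real m + 1"
    and e4: "a^4 + real m * (b - a/(2*real m))^4 + real m * (-b - a/(2*real m))^4 = (2*real m + 1) * k"
  shows "(a^2)^2 - 2 * ((real (2*m+1) - 1) / (real (2*m+1) + 1)) * a^2 + G (real (2*m+1)) k = 0"
proof -
  define x where "x = real m"
  have x: "x \<ge> 2" using m by (simp add: x_def)
  define c where "c = a/(2*x)"
  have ac: "a = 2*x*c" using x by (simp add: c_def)
  define B where "B = b^2"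
  have E2: "2*x*B = 2*x+1 - 4*x^2*c^2 - 2*x*c^2"
    using e2 x unfolding x_def[symmetric] c_def[symmetric] ac B_def by (simp add: field_simps power2_eq_square) 
  have E4: "(2*x+1)*k = 16*x^4*c^4 + 2*x*(B^2 + 6*B*c^2 + c^4)"
    using e4 x unfolding x_def[symmetric] c_def[symmetric] ac B_def by (simp add: field_simps) (algebra)
  have P: "(2*x+1)*((4*x^2*c^2)^2*((2*x+2)*(2*x-2)) - 4*x*(2*x-2)*(4*x^2*c^2) + (2*x+1)*(2*x)^2 - (2*x)^3*k) = 0"
    using E2 E4 by algebra
  have rN: "real (2*m+1) = 2*x+1" by (simp add: x_def)
  have nz: "2*x+1 \<noteq> 0" "(2*x+2)*(2*x-2) \<noteq> 0" using x by auto
  have P2: "(4*x^2*c^2)^2*((2*x+2)*(2*x-2)) - 4*x*(2*x-2)*(4*x^2*c^2) + (2*x+1)*(2*x)^2 - (2*x)^3*k = 0"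
    using P nz by simp
  define D where "D = (2*x+2)*(2*x-2)"
  have D: "D \<noteq> 0" using nz by (simp add: D_def)
  have r1: "(2*x+1-1)/(2*x+1+1) = (2*x*(2*x-2))/D"
  proof -
    have "2*x+1+1 \<noteq> 0" "2*x-2 \<noteq> 0" using x by auto
    then show ?thesis unfolding D_def by (simp add: divide_simps)
  qed
  have r2: "(2*x+1+1)*(2*x+1-3) = D" unfolding D_def by (simp add: algebra_simps)
  have "((2*x*c)^2)^2 - 2 * ((2*x+1-1)/(2*x+1+1)) * (2*x*c)^2 + ((2*x+1)*(2*x+1-1)^2 - (2*x+1-1)^3*k)/((2*x+1+1)*(2*x+1-3))
     = ((4*x^2*c^2)^2*D - 4*x*(2*x-2)*(4*x^2*c^2) + (2*x+1)*(2*x)^2 - (2*x)^3*k) / D"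
    unfolding r1 r2 using D by (simp add: field_simps)
  also have "\<dots> = 0" using P2 unfolding D_def by simp
  finally show ?thesis unfolding rN G_def ac .
qed
theorem proposition1:
  fixes N :: nat and \<kappa> a b :: real
  assumes "N \<ge> 5" and "odd N" and "a > 0"
    and "emp_mean N (Phi N a b) (\<lambda>x. x) = 0"
    and "emp_mean N (Phi N a b) (\<lambda>x. x^2) = 1"
    and "emp_mean N (Phi N a b) (\<lambda>x. x^4) = \<kappa>"
    and larger_root: "\<forall>y::real. y^2 - 2 * ((real N - 1) / (real N + 1)) * y + G (real N) \<kappa> = 0
                         \<longrightarrow> y \<le> a^2"
  shows "(a^2)^2 - 2 * ((real N - 1) / (real N + 1)) * a^2 + G (real N) \<kappa> = 0
         \<and> a = a_fun (real N) \<kappa>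
         \<and> (\<forall>k::real. k > 1 \<longrightarrow>
              (\<lambda>n::nat. a_fun (real (2*n+1)) k) \<sim>[at_top]
              (\<lambda>n::nat. (real (2*n+1) * (k - 1)) powr (1/4)))"
proof -
  obtain m where Nm: "N = 2*m+1" using assms(2) oddE by blast
  have m: "m \<ge> 2" using assms(1) Nm by simp
  have Np: "real N > 0" using Nm by simp
  have e2: "a^2 + real m * (b - a/(2*real m))^2 + real m * (-b - a/(2*real m))^2 = 2*real m + 1"
    using assms(5) Np sum_Phi[of "\<lambda>x. x^2" m a b] unfolding emp_mean_def Nm by (simp add: field_simps)
  have e4: "a^4 + real m * (b - a/(2*real m))^4 + real m * (-b - a/(2*real m))^4 = (2*real m + 1) * \<kappa>"
    using assms(6) Np sum_Phi[of "\<lambda>x. x^4" m a b] unfolding emp_mean_def Nm by (simp add: field_simps)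
  define p where "p = (real N - 1) / (real N + 1)"
  define g where "g = G (real N) \<kappa>"
  have Q: "(a^2)^2 - 2 * p * a^2 + g = 0"
    unfolding p_def g_def Nm using quad[OF m e2 e4] by simp
  have Dd: "p^2 - g = (a^2 - p)^2" using Q by (simp add: algebra_simps power2_eq_square)
  define y where "y = p + sqrt (p^2 - g)"
  have yp: "(y - p)^2 = p^2 - g" unfolding y_def Dd by simp
  have "y^2 - 2*p*y + g = 0"
    using yp by (simp add: algebra_simps power2_eq_square)
  hence "y \<le> a^2" using larger_root unfolding p_def g_def by blast
  hence "sqrt ((a^2 - p)^2) \<le> a^2 - p" unfolding y_def Dd by simp
  hence "a^2 = y" unfolding y_def Dd by simp
  hence "a = sqrt y" using assms(3) by (metis less_imp_le real_sqrt_unique)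
  hence "a = a_fun (real N) \<kappa>" unfolding y_def p_def g_def a_fun_def .
  with Q asymp show ?thesis unfolding p_def g_def by blast
qed

end
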